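(* Assume the axiom of choice. Let $\pi_0,\pi_1 : E\rightrightarrows V$ be a connected graph where $E$ and $V$ are both sets. Then a spanning tree for the graph merely exists.
   Context: Work in homotopy type theory. A graph is a pair of types $V,E$ with maps $\pi_0,\pi_1 : E\to V$; its coequalizer $V/E$ is the higher inductive type with points $[v]$ and paths $[\pi_0(e)]=[\pi_1(e)]$. A graph is connected if its coequalizer is a connected type, and is a tree if its coequalizer is contractible. A subgraph is a graph $D\rightrightarrows U$ with embeddings $h:D\hookrightarrow E$, $k:U\hookrightarrow V$ commuting with both endpoint maps. A spanning tree is a subgraph that is a tree, whose vertex embedding $U\hookrightarrow V$ is an equivalence, and whose edge embedding $D\hookrightarrow E$ has decidable image. *)

theory Defs
  imports Main
begin

text \<open>A graph: vertex set V, edge set E, endpoint maps s (= pi0) and t (= pi1).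
An oriented edge is a pair (e, b); b = True means traversed from s e to t e.\<close>

definition graph :: "'v set \<Rightarrow> 'e set \<Rightarrow> ('e \<Rightarrow> 'v) \<Rightarrow> ('e \<Rightarrow> 'v) \<Rightarrow> bool" where
  "graph V E s t \<longleftrightarrow> (\<forall>e\<in>E. s e \<in> V \<and> t e \<in> V)"

definition osrc :: "('e \<Rightarrow> 'v) \<Rightarrow> ('e \<Rightarrow> 'v) \<Rightarrow> 'e \<times> bool \<Rightarrow> 'v" where
  "osrc s t x = (if snd x then s (fst x) else t (fst x))"

definition otgt :: "('e \<Rightarrow> 'v) \<Rightarrow> ('e \<Rightarrow> 'v) \<Rightarrow> 'e \<times> bool \<Rightarrow> 'v" where
  "otgt s t x = (if snd x then t (fst x) else s (fst x))"

inductive walk :: "'v set \<Rightarrow> 'e set \<Rightarrow> ('e \<Rightarrow> 'v) \<Rightarrow> ('e \<Rightarrow> 'v) \<Rightarrow> 'v \<Rightarrow> ('e \<times> bool) list \<Rightarrow> 'v \<Rightarrow> bool"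
  for V E s t where
  walk_nil: "u \<in> V \<Longrightarrow> walk V E s t u [] u"
| walk_cons: "fst x \<in> E \<Longrightarrow> u \<in> V \<Longrightarrow> osrc s t x = u \<Longrightarrow> walk V E s t (otgt s t x) ws w
      \<Longrightarrow> walk V E s t u (x # ws) w"

fun reduced :: "('e \<times> bool) list \<Rightarrow> bool" where
  "reduced (x # y # ws) = ((fst x \<noteq> fst y \<or> snd x = snd y) \<and> reduced (y # ws))"
| "reduced _ = True"

text \<open>Connected: the coequalizer is connected, i.e. inhabited and any two vertices
are merely identified, i.e. joined by a walk.\<close>
definition connected_graph :: "'v set \<Rightarrow> 'e set \<Rightarrow> ('e \<Rightarrow> 'v) \<Rightarrow> ('e \<Rightarrow> 'v) \<Rightarrow> bool" where
  "connected_graph V E s t \<longleftrightarrow> V \<noteq> {} \<and> (\<forall>u\<in>V. \<forall>v\<in>V. \<exists>ws. walk V E s t u ws v)"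

text \<open>Tree: the coequalizer is contractible, i.e. inhabited and each identity type
[u] = [v] (equivalent to the set of reduced walks from u to v) is contractible.\<close>
definition is_tree :: "'v set \<Rightarrow> 'e set \<Rightarrow> ('e \<Rightarrow> 'v) \<Rightarrow> ('e \<Rightarrow> 'v) \<Rightarrow> bool" where
  "is_tree V E s t \<longleftrightarrow> V \<noteq> {} \<and>
     (\<forall>u\<in>V. \<forall>v\<in>V. \<exists>!ws. walk V E s t u ws v \<and> reduced ws)"

text \<open>Spanning tree: a subset D of the edges (decidable image is automatic classically),
all vertices kept, endpoint maps restricted, forming a tree.\<close>
definition spanning_tree :: "'v set \<Rightarrow> 'e set \<Rightarrow> ('e \<Rightarrow> 'v) \<Rightarrow> ('e \<Rightarrow> 'v) \<Rightarrow> 'e set \<Rightarrow> bool" where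
  "spanning_tree V E s t D \<longleftrightarrow> D \<subseteq> E \<and> is_tree V D s t"

end

theory Submission
  imports Defs
begin

lemma walk_V: "walk V D s t u ws v \<Longrightarrow> u \<in> V \<and> v \<in> V"
  by (induction rule: walk.induct) auto

lemma walk_append: "walk V D s t u ws v \<Longrightarrow> walk V D s t v ws' w \<Longrightarrow> walk V D s t u (ws @ ws') w"
  by (induction rule: walk.induct) (auto intro: walk.intros)

lemma walk_append_D: "walk V D s t u (ws @ ws') w \<Longrightarrow> \<exists>v. walk V D s t u ws v \<and> walk V D s t v ws' w"
proof (induction ws arbitrary: u)
  case Nil
  then show ?case using walk_V by (fastforce intro: walk.intros)
next
  case (Cons x ws)
  from Cons.prems have "fst x \<in> D" "u \<in> V" "osrc s t x = u" "walk V D s t (otgt s t x) (ws @ ws') w"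
    by (auto elim: walk.cases)
  with Cons.IH show ?case by (blast intro: walk.intros)
qed

definition flip :: "'e \<times> bool \<Rightarrow> 'e \<times> bool" where "flip x = (fst x, \<not> snd x)"

lemma walk_rev: "walk V D s t u ws v \<Longrightarrow> walk V D s t v (rev (map flip ws)) u"
proof (induction rule: walk.induct)
  case (walk_nil u) then show ?case by (auto intro: walk.intros)
next
  case (walk_cons x u ws w)
  have "walk V D s t (otgt s t x) [flip x] u"
    using walk_cons walk_V[OF walk_cons(4)]
    by (auto intro!: walk.intros simp: flip_def osrc_def otgt_def)
  with walk_cons show ?case using walk_append by fastforce
qed

lemma walk_edges: "walk V D s t u ws v \<Longrightarrow> fst ` set ws \<subseteq> D"
  by (induction rule: walk.induct) auto

lemma walk_mono: "walk V D s t u ws v \<Longrightarrow> fst ` set ws \<subseteq> D' \<Longrightarrow> walk V D' s t u ws v"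
  by (induction rule: walk.induct) (auto intro: walk.intros)

lemma reduced_tl: "reduced (x # ws) \<Longrightarrow> reduced ws"
  by (cases ws) auto

lemma reduced_appR: "reduced (a @ b) \<Longrightarrow> reduced b"
  by (induction a) (auto dest: reduced_tl)

lemma reduced_appL: "reduced (a @ b) \<Longrightarrow> reduced a"
  by (induction a rule: reduced.induct) auto

definition conn where "conn V D s t u v \<longleftrightarrow> (\<exists>ws. walk V D s t u ws v)"

lemma conn_sym: "conn V D s t u v \<Longrightarrow> conn V D s t v u"
  unfolding conn_def by (metis walk_rev)

lemma conn_trans: "conn V D s t u v \<Longrightarrow> conn V D s t v w \<Longrightarrow> conn V D s t u w"
  unfolding conn_def by (metis walk_append)

definition acyc where "acyc V D s t \<longleftrightarrow> (\<forall>u v ws1 ws2. walk V D s t u ws1 v \<and> reduced ws1 \<and>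
   walk V D s t u ws2 v \<and> reduced ws2 \<longrightarrow> ws1 = ws2)"

lemma acycD: "acyc V D s t \<Longrightarrow> walk V D s t u ws1 v \<Longrightarrow> reduced ws1 \<Longrightarrow>
   walk V D s t u ws2 v \<Longrightarrow> reduced ws2 \<Longrightarrow> ws1 = ws2"
  unfolding acyc_def by blast

lemma exists_reduced: "walk V D s t u ws v \<Longrightarrow> \<exists>ws'. walk V D s t u ws' v \<and> reduced ws'"
proof (induction rule: walk.induct)
  case (walk_nil u) then show ?case by (auto intro: walk.intros)
next
  case (walk_cons x u ws w)
  then obtain ws' where ws': "walk V D s t (otgt s t x) ws' w" "reduced ws'" by blast
  show ?case
  proof (cases "\<exists>y ws''. ws' = y # ws'' \<and> fst y = fst x \<and> snd y \<noteq> snd x")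
    case True
    then obtain y ws'' where y: "ws' = y # ws''" "fst y = fst x" "snd y \<noteq> snd x" by blast
    with ws' have "walk V D s t (otgt s t y) ws'' w" "osrc s t y = otgt s t x"
      by (auto elim: walk.cases)
    moreover have "otgt s t y = u" using y walk_cons(3)
      by (auto simp: osrc_def otgt_def)
    ultimately show ?thesis using ws' y reduced_tl by blast
  next
    case False
    then have "reduced (x # ws')" using ws'(2) by (cases ws') auto
    then show ?thesis using walk_cons ws' by (blast intro: walk.intros)
  qed
qed

lemma noconn_x:
  assumes "\<not> conn V D s t (s e) (t e)" "fst x = e"
  shows "\<not> conn V D s t (osrc s t x) (otgt s t x) \<and> \<not> conn V D s t (otgt s t x) (osrc s t x)"
proof -
  have n2: "\<not> conn V D s t (t e) (s e)" using assms(1) conn_sym[of V D s t "t e" "s e"] by blast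
  show ?thesis
  proof (cases "snd x")
    case True
    then show ?thesis using assms(1) n2 assms(2) by (simp add: osrc_def otgt_def)
  next
    case False
    then show ?thesis using assms(1) n2 assms(2) by (simp add: osrc_def otgt_def)
  qed
qed

lemma decomp:
  assumes ac: "acyc V D s t" and nc: "\<not> conn V D s t (s e) (t e)"
    and w: "walk V (insert e D) s t u ws v" and r: "reduced ws"
  shows "walk V D s t u ws v \<or> (\<exists>p x q. ws = p @ [x] @ q \<and> fst x = e \<and>
           walk V D s t u p (osrc s t x) \<and> walk V D s t (otgt s t x) q v)"
proof (cases "\<exists>x\<in>set ws. fst x = e")
  case False
  then have "fst ` set ws \<subseteq> D" using walk_edges[OF w] by force
  then show ?thesis using walk_mono[OF w] by simp
next
  case True
  then obtain p x q where pxq: "ws = p @ x # q" "fst x = e" "\<forall>y\<in>set p. fst y \<noteq> e"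
    using split_list_first_prop[of ws "\<lambda>x. fst x = e"] by blast
  from walk_append_D[of V "insert e D" s t u p "x # q" v] w pxq obtain m where
    m: "walk V (insert e D) s t u p m" "walk V (insert e D) s t m (x # q) v" by auto
  from m(2) have m2: "osrc s t x = m" "walk V (insert e D) s t (otgt s t x) q v"
    by (auto elim: walk.cases)
  have pD: "walk V D s t u p (osrc s t x)"
  proof -
    have "fst ` set p \<subseteq> D" using walk_edges[OF m(1)] pxq(3) by force
    then show ?thesis using walk_mono[OF m(1)] m2(1) by simp
  qed
  have "walk V D s t (otgt s t x) q v"
  proof (cases "\<exists>y\<in>set q. fst y = e")
    case False
    then have "fst ` set q \<subseteq> D" using walk_edges[OF m2(2)] by force
    then show ?thesis using walk_mono[OF m2(2)] by simp
  next
    case True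
    then obtain r0 y q' where ryq: "q = r0 @ y # q'" "fst y = e" "\<forall>z\<in>set r0. fst z \<noteq> e"
      using split_list_first_prop[of q "\<lambda>x. fst x = e"] by blast
    from walk_append_D[of V "insert e D" s t "otgt s t x" r0 "y # q'" v] m2 ryq obtain n where
      n: "walk V (insert e D) s t (otgt s t x) r0 n" "walk V (insert e D) s t n (y # q') v" by auto
    from n(2) have n2: "osrc s t y = n" by (auto elim: walk.cases)
    have rD: "walk V D s t (otgt s t x) r0 (osrc s t y)"
    proof -
      have "fst ` set r0 \<subseteq> D" using walk_edges[OF n(1)] ryq(3) by force
      then show ?thesis using walk_mono[OF n(1)] n2 by simp
    qed
    show ?thesis
    proof (cases "snd x = snd y")
      case True
      have c: "conn V D s t (otgt s t x) (osrc s t y)" using rD unfolding conn_def by blast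
      have "conn V D s t (s e) (t e)"
      proof (cases "snd x")
        case True
        then show ?thesis using c \<open>snd x = snd y\<close> pxq(2) ryq(2) conn_sym
          by (simp add: osrc_def otgt_def)
      next
        case False
        then show ?thesis using c \<open>snd x = snd y\<close> pxq(2) ryq(2)
          by (simp add: osrc_def otgt_def)
      qed
      with nc show ?thesis by blast
    next
      case False
      then have eq: "osrc s t y = otgt s t x" using pxq ryq
        by (cases "snd x") (auto simp: osrc_def otgt_def)
      have "reduced (x # q)" using r pxq(1) reduced_appR[of p "x # q"] by simp
      then have "reduced (r0 @ y # q')" using ryq reduced_tl by simp
      then have rr: "reduced r0" by (rule reduced_appL)
      have nil: "walk V D s t (otgt s t x) [] (osrc s t y)"
        using walk_V[OF rD] eq by (auto intro: walk.intros)
      have "r0 = []" using acycD[OF ac rD rr nil] by simp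
      then have "reduced (x # y # q')" using \<open>reduced (x # q)\<close> ryq by simp
      then show ?thesis using pxq ryq False by simp
    qed
  qed
  then show ?thesis using pD pxq
    by (intro disjI2 exI[of _ p] exI[of _ x] exI[of _ q]) simp
qed

lemma acyc_insert:
  assumes ac: "acyc V D s t" and nc: "\<not> conn V D s t (s e) (t e)"
  shows "acyc V (insert e D) s t"
  unfolding acyc_def
proof (intro allI impI)
  fix u v ws1 ws2
  assume A: "walk V (insert e D) s t u ws1 v \<and> reduced ws1 \<and> walk V (insert e D) s t u ws2 v \<and> reduced ws2"
  note d1 = decomp[OF ac nc, of u ws1 v] and d2 = decomp[OF ac nc, of u ws2 v]
  have oneside: False if "walk V D s t u p (osrc s t x)" "walk V D s t (otgt s t x) q v"
      "walk V D s t u w v" "fst x = e" for p x q w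
  proof -
    have c1: "conn V D s t (osrc s t x) u" using walk_rev[OF that(1)] unfolding conn_def by blast
    have c2: "conn V D s t u v" using that(3) unfolding conn_def by blast
    have c3: "conn V D s t v (otgt s t x)" using walk_rev[OF that(2)] unfolding conn_def by blast
    have "conn V D s t (osrc s t x) (otgt s t x)"
      using conn_trans[OF conn_trans[OF c1 c2] c3] .
    then show False using noconn_x[OF nc that(4)] by blast
  qed
  show "ws1 = ws2"
  proof (cases "walk V D s t u ws1 v")
    case W1: True
    show ?thesis
    proof (cases "walk V D s t u ws2 v")
      case True
      then show ?thesis using W1 A acycD[OF ac W1 _ True] by blast
    next
      case False
      then obtain p2 x2 q2 where "fst x2 = e"
        "walk V D s t u p2 (osrc s t x2)" "walk V D s t (otgt s t x2) q2 v" using d2 A by blast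
      then show ?thesis using oneside[OF _ _ W1] by blast
    qed
  next
    case W1: False
    then obtain p1 x1 q1 where P1: "ws1 = p1 @ [x1] @ q1" "fst x1 = e"
      "walk V D s t u p1 (osrc s t x1)" "walk V D s t (otgt s t x1) q1 v" using d1 A by blast
    show ?thesis
    proof (cases "walk V D s t u ws2 v")
      case True
      then show ?thesis using oneside[OF P1(3) P1(4) True P1(2)] by blast
    next
      case False
      then obtain p2 x2 q2 where P2: "ws2 = p2 @ [x2] @ q2" "fst x2 = e"
        "walk V D s t u p2 (osrc s t x2)" "walk V D s t (otgt s t x2) q2 v" using d2 A by blast
      show ?thesis
      proof (cases "snd x1 = snd x2")
        case True
        then have x: "x1 = x2" using P1 P2 by (simp add: prod_eq_iff)
        have rp: "reduced p1" "reduced p2" "reduced q1" "reduced q2"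
        proof -
          have a1: "reduced (p1 @ x1 # q1)" "reduced (p2 @ x2 # q2)" using A P1(1) P2(1) by simp_all
          show "reduced p1" using reduced_appL[OF a1(1)] .
          show "reduced p2" using reduced_appL[OF a1(2)] .
          show "reduced q1" using reduced_tl[OF reduced_appR[OF a1(1)]] .
          show "reduced q2" using reduced_tl[OF reduced_appR[OF a1(2)]] .
        qed
        have "p1 = p2" using acycD[OF ac P1(3) rp(1)] P2(3) x rp(2) by simp
        moreover have "q1 = q2" using acycD[OF ac P1(4) rp(3)] P2(4) x rp(4) by simp
        ultimately show ?thesis using P1 P2 x by simp
      next
        case False
        then have "osrc s t x2 = otgt s t x1" using P1 P2
          by (cases "snd x1") (auto simp: osrc_def otgt_def)
        have c1: "conn V D s t (osrc s t x1) u" using walk_rev[OF P1(3)] unfolding conn_def by blast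
        have c2: "conn V D s t u (osrc s t x2)" using P2(3) unfolding conn_def by blast
        have "conn V D s t (osrc s t x1) (otgt s t x1)"
          using conn_trans[OF c1 c2] \<open>osrc s t x2 = otgt s t x1\<close> by simp
        then show ?thesis using noconn_x[OF nc P1(2)] by blast
      qed
    qed
  qed
qed

lemma acyc_empty: "acyc V {} s t"
proof -
  have "ws = []" if "walk V {} s t u ws v" for u ws v
    using that by (cases rule: walk.cases) auto
  then show ?thesis unfolding acyc_def by blast
qed

lemma acyc_chain:
  assumes C: "C \<in> chains {D. D \<subseteq> E \<and> acyc V D s t}" and ne: "C \<noteq> {}"
  shows "acyc V (\<Union>C) s t"
  unfolding acyc_def
proof (intro allI impI)
  fix u v ws1 ws2
  assume A: "walk V (\<Union>C) s t u ws1 v \<and> reduced ws1 \<and> walk V (\<Union>C) s t u ws2 v \<and> reduced ws2"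
  let ?F = "fst ` set ws1 \<union> fst ` set ws2"
  have "?F \<subseteq> \<Union>C"
    using A walk_edges[of V "\<Union>C" s t u ws1 v] walk_edges[of V "\<Union>C" s t u ws2 v] by (simp only: Un_subset_iff)
  moreover have "finite ?F" by simp
  moreover have "subset.chain UNIV C" using C by (simp add: chains_alt_def subset.chain_def)
  ultimately obtain D where D: "D \<in> C" "?F \<subseteq> D"
    using finite_subset_Union_chain[of ?F C UNIV] ne by metis
  have "acyc V D s t" using C D(1) by (auto simp: chains_def)
  moreover have "walk V D s t u ws1 v" "walk V D s t u ws2 v"
    using A D(2) walk_mono[of V "\<Union>C" s t u _ v D] by blast+
  ultimately show "ws1 = ws2" using A acycD[of V D s t u ws1 v ws2] by blast
qed

theorem lemma4p7:
  fixes V :: "'v set" and E :: "'e set" and s t :: "'e \<Rightarrow> 'v"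
  assumes "graph V E s t"
    and "connected_graph V E s t"
  shows "\<exists>D. spanning_tree V E s t D"
proof -
  let ?A = "{D. D \<subseteq> E \<and> acyc V D s t}"
  have "\<forall>C\<in>chains ?A. \<Union>C \<in> ?A"
  proof
    fix C assume C: "C \<in> chains ?A"
    have "\<Union>C \<subseteq> E" using C by (auto simp: chains_def)
    moreover have "acyc V (\<Union>C) s t"
      using acyc_chain[OF C] acyc_empty by (cases "C = {}") auto
    ultimately show "\<Union>C \<in> ?A" by blast
  qed
  then obtain M where M: "M \<in> ?A" "\<forall>X\<in>?A. M \<subseteq> X \<longrightarrow> X = M"
    using Zorn_Lemma[of ?A] by blast
  have ce: "conn V M s t (s e) (t e)" if e: "e \<in> E" for e
  proof (rule ccontr)
    assume nc: "\<not> conn V M s t (s e) (t e)"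
    then have "insert e M \<in> ?A" using acyc_insert[of V M s t e] M(1) e by blast
    then have "e \<in> M" using M(2) by blast
    have "s e \<in> V" "t e \<in> V" using assms(1) e by (auto simp: graph_def)
    then have "walk V M s t (s e) [(e, True)] (t e)"
      using \<open>e \<in> M\<close> by (auto intro!: walk.intros simp: osrc_def otgt_def)
    then show False using nc unfolding conn_def by blast
  qed
  have cw: "conn V M s t u v" if "walk V E s t u ws v" for u ws v
    using that
  proof (induction rule: walk.induct)
    case (walk_nil u) then show ?case unfolding conn_def by (blast intro: walk.intros)
  next
    case (walk_cons x u ws w)
    have "conn V M s t (osrc s t x) (otgt s t x)"
      using ce[OF walk_cons(1)] conn_sym by (cases "snd x") (auto simp: osrc_def otgt_def)
    then show ?case using conn_trans[OF _ walk_cons.IH] walk_cons(3) by simp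
  qed
  have "is_tree V M s t"
    unfolding is_tree_def
  proof (intro conjI ballI)
    show "V \<noteq> {}" using assms(2) by (simp add: connected_graph_def)
  next
    fix u v assume uv: "u \<in> V" "v \<in> V"
    then obtain ws where "walk V E s t u ws v" using assms(2) by (auto simp: connected_graph_def)
    then have "conn V M s t u v" using cw by blast
    then obtain ws0 where "walk V M s t u ws0 v" unfolding conn_def by blast
    then obtain ws' where W: "walk V M s t u ws' v" "reduced ws'"
      using exists_reduced[of V M s t u ws0 v] by blast
    have ac: "acyc V M s t" using M(1) by blast
    show "\<exists>!ws. walk V M s t u ws v \<and> reduced ws"
    proof (rule ex1I[of _ ws'])
      show "walk V M s t u ws' v \<and> reduced ws'" using W by blast
    next
      fix y assume "walk V M s t u y v \<and> reduced y"
      then show "y = ws'" using acycD[OF ac _ _ W] by blast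
    qed
  qed
  then show ?thesis using M(1) unfolding spanning_tree_def by blast
qed

end
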